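(* Let $G$ be a graph, $C\subseteq V(G)$, $\mathcal{B}=\{N_G[v]: v\in C\}$, and $k$ a positive integer. Let $X\subseteq V(G)$ and let $A=\{A_1,\ldots,A_\ell\}$ be a subset of the connected components of $G-X$ with $\max_{i\in[\ell]}|V(A_i)|=t$. If $\ell>(|X|+t)\cdot 2^{(|X|+t)^2}\cdot 2^{2t+|X|+1}$, then there exists $i\in[\ell]$ such that, with $G'=G-V(A_i)$ and $\mathcal{B}'=\{N_{G'}[v]: v\in C\setminus V(A_i)\}$, we have NCTD$^+(\mathcal{B})\le k$ if and only if NCTD$^+(\mathcal{B}')\le k$ (in $G'$).
   Context: $N_G[v]$ is the closed neighborhood of $v$ in $G$. A positive teaching map for a set $\mathcal{B}$ of closed neighborhoods assigns to each $B\in\mathcal{B}$ a set $T(B)\subseteq B$. A vertex $w$ distinguishes $B,B'$ if $w$ lies in exactly one of $B,B'$. $T$ is non-clashing if for all distinct $B,B'\in\mathcal{B}$ some $w\in T(B)\cup T(B')$ distinguishes $B$ and $B'$; its size is $\max_{B\in\mathcal{B}}|T(B)|$. NCTD$^+(\mathcal{B})$ is the minimum size of a positive non-clashing teaching map for $\mathcal{B}$. $[\ell]=\{1,\ldots,\ell\}$. *)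

theory Defs
  imports Main
begin

definition simple_graph :: "'a set \<Rightarrow> ('a \<Rightarrow> 'a \<Rightarrow> bool) \<Rightarrow> bool" where
  "simple_graph V E \<longleftrightarrow> finite V \<and> (\<forall>u v. E u v \<longrightarrow> u \<in> V \<and> v \<in> V)
     \<and> (\<forall>u v. E u v \<longrightarrow> E v u) \<and> (\<forall>v. \<not> E v v)"

definition closed_nbhd :: "'a set \<Rightarrow> ('a \<Rightarrow> 'a \<Rightarrow> bool) \<Rightarrow> 'a \<Rightarrow> 'a set" where
  "closed_nbhd S E v = insert v {u \<in> S. E u v}"

definition reach_in :: "'a set \<Rightarrow> ('a \<Rightarrow> 'a \<Rightarrow> bool) \<Rightarrow> 'a \<Rightarrow> 'a \<Rightarrow> bool" where
  "reach_in S E = (\<lambda>u w. u \<in> S \<and> w \<in> S \<and> E u w)\<^sup>*\<^sup>*"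

definition components_of :: "'a set \<Rightarrow> ('a \<Rightarrow> 'a \<Rightarrow> bool) \<Rightarrow> 'a set set" where
  "components_of S E = {{w. reach_in S E v w} | v. v \<in> S}"

definition non_clashing_pos :: "'a set set \<Rightarrow> ('a set \<Rightarrow> 'a set) \<Rightarrow> bool" where
  "non_clashing_pos \<B> T \<longleftrightarrow> (\<forall>B\<in>\<B>. T B \<subseteq> B) \<and>
     (\<forall>B\<in>\<B>. \<forall>B'\<in>\<B>. B \<noteq> B' \<longrightarrow> (\<exists>w\<in>T B \<union> T B'. (w \<in> B) \<noteq> (w \<in> B')))"

definition NCTD_pos :: "'a set set \<Rightarrow> nat" where
  "NCTD_pos \<B> = (LEAST k. \<exists>T. non_clashing_pos \<B> T \<and> (\<forall>B\<in>\<B>. card (T B) \<le> k))"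

end

theory Submission
  imports Defs
begin

definition is_swap :: "('a \<Rightarrow> 'a \<Rightarrow> bool) \<Rightarrow> 'a set \<Rightarrow> ('a \<Rightarrow> 'a) \<Rightarrow> 'a set \<Rightarrow> 'a set \<Rightarrow> bool" where
  "is_swap E C s A D \<longleftrightarrow> (\<forall>u. s (s u) = u) \<and> (\<forall>u v. E (s u) (s v) = E u v)
     \<and> (\<forall>u. u \<notin> A \<union> D \<longrightarrow> s u = u) \<and> s ` A = D \<and> (\<forall>u. (s u \<in> C) = (u \<in> C))"

definition nc_ok :: "'a set set \<Rightarrow> nat \<Rightarrow> bool" where
  "nc_ok B k \<longleftrightarrow> (\<exists>T. non_clashing_pos B T \<and> (\<forall>b\<in>B. card (T b) \<le> k))"

locale copies =
  fixes V :: "'a set" and E :: "'a \<Rightarrow> 'a \<Rightarrow> bool" and C X :: "'a set" and DD :: "'a set set"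
  assumes sg: "simple_graph V E" and CV: "C \<subseteq> V" and XV: "X \<subseteq> V"
    and Dsub: "\<And>D. D \<in> DD \<Longrightarrow> D \<subseteq> V - X"
    and Dcomp: "\<And>D u v. D \<in> DD \<Longrightarrow> u \<in> D \<Longrightarrow> E u v \<Longrightarrow> v \<in> X \<or> v \<in> D"
    and Ddisj: "\<And>D1 D2. D1 \<in> DD \<Longrightarrow> D2 \<in> DD \<Longrightarrow> D1 \<noteq> D2 \<Longrightarrow> D1 \<inter> D2 = {}"
    and Dswap: "\<And>A D. A \<in> DD \<Longrightarrow> D \<in> DD \<Longrightarrow> A \<noteq> D \<Longrightarrow> \<exists>s. is_swap E C s A D"
    and finDD: "finite DD"
begin

abbreviation "N \<equiv> closed_nbhd V E"

lemma Esym: "E u v \<Longrightarrow> E v u" using sg unfolding simple_graph_def by blast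
lemma EV: "E u v \<Longrightarrow> u \<in> V \<and> v \<in> V" using sg unfolding simple_graph_def by blast
lemma finV: "finite V" using sg unfolding simple_graph_def by blast
lemma finN: "finite (N v)" using finV unfolding closed_nbhd_def by auto

lemma out_disj: "D \<in> DD \<Longrightarrow> v \<notin> X \<Longrightarrow> v \<notin> D \<Longrightarrow> N v \<inter> D = {}"
  unfolding closed_nbhd_def using Dcomp by auto

lemma in_sub: "D \<in> DD \<Longrightarrow> v \<in> D \<Longrightarrow> N v \<subseteq> D \<union> X"
  unfolding closed_nbhd_def using Dcomp Esym by blast

lemma DX: "D \<in> DD \<Longrightarrow> x \<in> X \<Longrightarrow> x \<notin> D" using Dsub by blast

lemma N'_eq: "v \<notin> A \<Longrightarrow> closed_nbhd (V - A) E v = N v - A"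
  unfolding closed_nbhd_def by auto

context
  fixes s A D
  assumes sw: "is_swap E C s A D" and AD: "A \<in> DD" "D \<in> DD"
begin

lemma s_all: "(\<forall>u. s (s u) = u) \<and> (\<forall>u v. E (s u) (s v) = E u v)
     \<and> (\<forall>u. u \<notin> A \<union> D \<longrightarrow> s u = u) \<and> s ` A = D \<and> (\<forall>u. (s u \<in> C) = (u \<in> C))"
  using sw unfolding is_swap_def .
lemma s_inv[simp]: "s (s u) = u" using s_all by auto
lemma s_E: "E (s u) (s v) = E u v" using s_all by auto
lemma s_out: "u \<notin> A \<union> D \<Longrightarrow> s u = u" using s_all by auto
lemma s_img: "s ` A = D" using s_all by auto
lemma s_C: "(s u \<in> C) = (u \<in> C)" using s_all by auto
lemma s_inj: "inj s"
proof (rule injI)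
  fix x y assume "s x = s y"
  then have "s (s x) = s (s y)" by simp
  then show "x = y" by simp
qed
lemma s_AD: "(s u \<in> D) = (u \<in> A)"
proof -
  have "(s u \<in> D) = (s u \<in> s ` A)" by (simp add: s_img)
  also have "\<dots> = (u \<in> A)" by (rule inj_image_mem_iff[OF s_inj])
  finally show ?thesis .
qed
lemma s_DA: "(s u \<in> A) = (u \<in> D)"
  using s_AD[of "s u"] by simp
lemma s_X: "x \<in> X \<Longrightarrow> s x = x"
  using s_out DX AD by blast
lemma s_V: "(s u \<in> V) = (u \<in> V)"
proof (cases "u \<in> A \<union> D")
  case True
  then have "s u \<in> A \<union> D" using s_AD s_DA by auto
  with True show ?thesis using Dsub AD by blast
next
  case False then show ?thesis using s_out by simp
qed
lemma s_N: "(s w \<in> N (s v)) = (w \<in> N v)"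
  unfolding closed_nbhd_def using s_V s_E s_inj by (auto simp: inj_eq)
lemma s_N2: "(w \<in> N (s v)) = (s w \<in> N v)"
  using s_N[of "s w" v] by simp
lemma s_N_img: "s ` N v = N (s v)"
proof (rule set_eqI)
  fix x
  have "(x \<in> s ` N v) = (s (s x) \<in> s ` N v)" by simp
  also have "\<dots> = (s x \<in> N v)" by (rule inj_image_mem_iff[OF s_inj])
  also have "\<dots> = (x \<in> N (s v))" using s_N2 by simp
  finally show "(x \<in> s ` N v) = (x \<in> N (s v))" .
qed
lemma s_NX: "x \<in> X \<Longrightarrow> (s w \<in> N x) = (w \<in> N x)"
  using s_N[of w x] s_X by simp
end

lemma transfer_meet:
  assumes "x \<in> X" "A \<in> DD" "D \<in> DD" "A \<noteq> D" "N x \<inter> A \<noteq> {}"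
  shows "N x \<inter> D \<noteq> {}"
proof -
  obtain s where sw: "is_swap E C s A D" using Dswap assms by blast
  obtain a where "a \<in> N x" "a \<in> A" using assms by blast
  then have "s a \<in> N x" "s a \<in> D" using s_NX[OF sw] s_AD[OF sw] assms by auto
  then show ?thesis by blast
qed

lemma inj_minus_aux:
  assumes A: "A \<in> DD" and three: "card DD \<ge> 3" and v1: "v1 \<notin> A" and v2: "v2 \<notin> A"
    and a: "a \<in> A" "a \<in> N v1" and eq: "N v1 - A = N v2 - A"
  shows "a \<in> N v2"
proof -
  have v1X: "v1 \<in> X" using out_disj[OF A, of v1] v1 a by blast
  obtain D l where D: "D \<in> DD" "D \<noteq> A" and l: "l \<in> DD" "l \<noteq> A" "l \<noteq> D"
  proof -
    have "card (DD - {A}) \<ge> 2" using three A finDD by (simp add: card_Diff_singleton)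
    then have "DD - {A} \<noteq> {}" by (metis card.empty not_numeral_le_zero)
    then obtain D where D: "D \<in> DD - {A}" by blast
    have "card (DD - {A} - {D}) \<ge> 1" using \<open>card (DD - {A}) \<ge> 2\<close> D finDD
      by (simp add: card_Diff_singleton)
    then have "DD - {A} - {D} \<noteq> {}" by (metis card.empty not_one_le_zero)
    then obtain l where "l \<in> DD - {A} - {D}" by blast
    with D that show ?thesis by blast
  qed
  show ?thesis
  proof (cases "v2 \<in> X")
    case True
    obtain s where sw: "is_swap E C s A D" using Dswap[OF A D(1)] D(2) by blast
    have "s a \<in> N v1" using s_NX[OF sw A D(1) v1X] a by simp
    moreover have "s a \<notin> A" using s_DA[OF sw A D(1)] s_AD[OF sw A D(1)] a Ddisj[OF A D(1)] D by blast
    ultimately have "s a \<in> N v2" using eq by blast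
    then show ?thesis using s_NX[OF sw A D(1) True] by simp
  next
    case False
    have "N v1 \<inter> A \<noteq> {}" using a by blast
    then have m1: "N v1 \<inter> D \<noteq> {}" "N v1 \<inter> l \<noteq> {}"
      using transfer_meet[OF v1X A] D l by auto
    have "D \<inter> A = {}" "l \<inter> A = {}" using Ddisj A D l by auto
    then have "N v2 \<inter> D \<noteq> {}" "N v2 \<inter> l \<noteq> {}" using m1 eq by blast+
    then have "v2 \<in> D" "v2 \<in> l" using out_disj False D l by blast+
    then show ?thesis using Ddisj D l by blast
  qed
qed

lemma inj_minus:
  assumes "A \<in> DD" "card DD \<ge> 3" "v1 \<notin> A" "v2 \<notin> A" "N v1 - A = N v2 - A"
  shows "N v1 = N v2"
  using inj_minus_aux[OF assms(1,2,3,4) _ _ assms(5)] inj_minus_aux[OF assms(1,2,4,3) _ _ assms(5)[symmetric]] assms(5)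
  by blast

end

context copies begin

lemma third:
  assumes "card DD \<ge> 3" "A \<in> DD" "D \<in> DD"
  obtains l where "l \<in> DD" "l \<noteq> A" "l \<noteq> D"
proof -
  have "card (DD - {A} - {D}) \<ge> 1"
    using assms finDD by (auto simp: card_Diff_singleton_if)
  then obtain l where "l \<in> DD - {A} - {D}"
    by (metis card.empty ex_in_conv not_one_le_zero)
  then show ?thesis using that by blast
qed

lemma disjX: "D \<in> DD \<Longrightarrow> D \<inter> X = {}" using Dsub by blast

lemma back_dir:
  assumes A: "A \<in> DD" and three: "card DD \<ge> 3" and big: "card DD \<ge> t + 2" and cA: "card A \<le> t"
    and ok: "nc_ok (closed_nbhd (V - A) E ` (C - A)) k"
  shows "nc_ok (N ` C) k"
proof -
  let ?N' = "closed_nbhd (V - A) E"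
  obtain T' where T'nc: "non_clashing_pos (?N' ` (C - A)) T'"
    and T'c: "\<forall>b\<in>?N' ` (C - A). card (T' b) \<le> k"
    using ok unfolding nc_ok_def by blast
  have T'sub: "\<And>v. v \<in> C - A \<Longrightarrow> T' (?N' v) \<subseteq> ?N' v"
    using T'nc unfolding non_clashing_pos_def by blast
  have T'dist: "\<And>v1 v2. v1 \<in> C - A \<Longrightarrow> v2 \<in> C - A \<Longrightarrow> ?N' v1 \<noteq> ?N' v2 \<Longrightarrow>
      \<exists>w \<in> T' (?N' v1) \<union> T' (?N' v2). (w \<in> ?N' v1) \<noteq> (w \<in> ?N' v2)"
  proof -
    fix v1 v2 assume "v1 \<in> C - A" "v2 \<in> C - A" "?N' v1 \<noteq> ?N' v2"
    moreover have "?N' v1 \<in> ?N' ` (C - A)" "?N' v2 \<in> ?N' ` (C - A)" using calculation by auto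
    ultimately show "\<exists>w \<in> T' (?N' v1) \<union> T' (?N' v2). (w \<in> ?N' v1) \<noteq> (w \<in> ?N' v2)"
      using T'nc unfolding non_clashing_pos_def by blast
  qed
  define sw where "sw D = (SOME s. is_swap E C s A D)" for D
  have swD: "\<And>D. D \<in> DD \<Longrightarrow> D \<noteq> A \<Longrightarrow> is_swap E C (sw D) A D"
  proof -
    fix D assume "D \<in> DD" "D \<noteq> A"
    then have "\<exists>s. is_swap E C s A D" using Dswap A by metis
    then show "is_swap E C (sw D) A D" unfolding sw_def by (rule someI_ex)
  qed
  have N'out: "\<And>D u. D \<in> DD \<Longrightarrow> D \<noteq> A \<Longrightarrow> u \<in> D \<Longrightarrow> ?N' u = N u"
  proof -
    fix D u assume D: "D \<in> DD" "D \<noteq> A" "u \<in> D"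
    have "u \<notin> A" using Ddisj[OF D(1) A] D by blast
    moreover have "u \<notin> X" using Dsub D by blast
    ultimately show "?N' u = N u" using N'_eq out_disj[OF A] by blast
  qed
  have finA: "finite A" using Dsub A finV finite_subset by blast
  define bad where "bad = {D \<in> DD - {A}. \<exists>u \<in> A \<inter> C. T' (N (sw D u)) \<subseteq> X}"
  have bad_le: "card bad \<le> card A"
  proof -
    have sub: "bad \<subseteq> (\<Union>u\<in>A\<inter>C. {D \<in> DD - {A}. T' (N (sw D u)) \<subseteq> X})" unfolding bad_def by blast
    have one: "card {D \<in> DD - {A}. T' (N (sw D u)) \<subseteq> X} \<le> 1" if u: "u \<in> A \<inter> C" for u
    proof -
      have "D1 = D2" if D1: "D1 \<in> DD - {A}" "T' (N (sw D1 u)) \<subseteq> X"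
        and D2: "D2 \<in> DD - {A}" "T' (N (sw D2 u)) \<subseteq> X" for D1 D2
      proof (rule ccontr)
        assume ne: "D1 \<noteq> D2"
        have D1': "D1 \<in> DD" and D2': "D2 \<in> DD" using D1 D2 by auto
        have s1: "is_swap E C (sw D1) A D1" using swD D1 by blast
        have s2: "is_swap E C (sw D2) A D2" using swD D2 by blast
        have u1: "sw D1 u \<in> D1" using s_AD[OF s1 A D1'] u D1 by auto
        have u2: "sw D2 u \<in> D2" using s_AD[OF s2 A D2'] u D2 by auto
        have c1: "sw D1 u \<in> C - A" using s_C[OF s1 A D1'] u u1 Ddisj[OF A, of D1] D1 by auto
        have c2: "sw D2 u \<in> C - A" using s_C[OF s2 A D2'] u u2 Ddisj[OF A, of D2] D2 by auto
        have e1: "?N' (sw D1 u) = N (sw D1 u)" using N'out D1 u1 by blast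
        have e2: "?N' (sw D2 u) = N (sw D2 u)" using N'out D2 u2 by blast
        have ne2: "N (sw D1 u) \<noteq> N (sw D2 u)"
        proof
          assume "N (sw D1 u) = N (sw D2 u)"
          moreover have "sw D1 u \<in> N (sw D1 u)" by (simp add: closed_nbhd_def)
          ultimately have "sw D1 u \<in> D2 \<union> X" using in_sub[of D2 "sw D2 u"] D2 u2 by blast
          then show False using u1 Ddisj[of D1 D2] D1 D2 ne disjX[of D1] by blast
        qed
        obtain w where w: "w \<in> T' (N (sw D1 u)) \<union> T' (N (sw D2 u))"
          "(w \<in> N (sw D1 u)) \<noteq> (w \<in> N (sw D2 u))"
          using T'dist[OF c1 c2] e1 e2 ne2 by auto
        have wX: "w \<in> X" using w D1 D2 by blast
        have "(w \<in> N (sw D1 u)) = (w \<in> N u)"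
          using s_N2[OF s1 A D1', of w u] s_X[OF s1 A D1' wX] D1 by simp
        moreover have "(w \<in> N (sw D2 u)) = (w \<in> N u)"
          using s_N2[OF s2 A D2', of w u] s_X[OF s2 A D2' wX] D2 by simp
        ultimately show False using w by simp
      qed
      moreover have "finite {D \<in> DD - {A}. T' (N (sw D u)) \<subseteq> X}" using finDD by simp
      ultimately show ?thesis by (simp add: card_le_Suc0_iff_eq)
    qed
    have "card bad \<le> card (\<Union>u\<in>A\<inter>C. {D \<in> DD - {A}. T' (N (sw D u)) \<subseteq> X})"
      using sub by (rule card_mono[rotated]) (rule finite_subset[OF _ finDD], blast)
    also have "\<dots> \<le> (\<Sum>u\<in>A\<inter>C. card {D \<in> DD - {A}. T' (N (sw D u)) \<subseteq> X})"
      using finA by (intro card_UN_le) simp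
    also have "\<dots> \<le> (\<Sum>u\<in>A\<inter>C. 1)" using one by (intro sum_mono) blast
    also have "\<dots> = card (A \<inter> C)" by simp
    also have "\<dots> \<le> card A" using finA by (simp add: card_mono)
    finally show ?thesis .
  qed
  obtain D where D: "D \<in> DD" "D \<noteq> A" "D \<notin> bad"
  proof (rule ccontr)
    assume "\<not> thesis"
    then have "DD - {A} \<subseteq> bad" using that by blast
    then have "card (DD - {A}) \<le> card bad" by (rule card_mono[rotated]) (simp add: bad_def finDD)
    moreover have "card (DD - {A}) = card DD - 1" using A finDD by simp
    ultimately show False using bad_le cA big by linarith
  qed
  obtain l where l: "l \<in> DD" "l \<noteq> A" "l \<noteq> D" using third[OF three A D(1)] by blast
  define s where "s = sw D"
  have sw: "is_swap E C s A D" using swD D unfolding s_def by blast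
  have sinv[simp]: "\<And>u. s (s u) = u" using s_inv[OF sw A D(1)] .
  have good: "\<And>u. u \<in> A \<inter> C \<Longrightarrow> \<not> T' (N (s u)) \<subseteq> X" using D unfolding bad_def s_def by blast
  have DA: "D \<inter> A = {}" and lA: "l \<inter> A = {}" and lD: "l \<inter> D = {}"
    using Ddisj A D l by auto
  have AX: "A \<inter> X = {}" and DX': "D \<inter> X = {}" and lX: "l \<inter> X = {}"
    using disjX A D l by auto
  define T where "T B = (if \<exists>u\<in>A\<inter>C. B = N u then s ` T' (s ` B) else T' (B - A))" for B
  have F1: "\<not>(\<exists>u\<in>A\<inter>C. N v = N u)" if v: "v \<in> C - A" for v
  proof
    assume "\<exists>u\<in>A\<inter>C. N v = N u"
    then obtain u where u: "u \<in> A \<inter> C" "N v = N u" by blast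
    show False
    proof (cases "v \<in> X")
      case False then have "N v \<inter> A = {}" using out_disj A v by blast
      moreover have "u \<in> N u" unfolding closed_nbhd_def by simp
      ultimately show False using u by blast
    next
      case True
      have "u \<in> N u" unfolding closed_nbhd_def by simp
      then have "N v \<inter> A \<noteq> {}" using u by blast
      then have "N v \<inter> D \<noteq> {}" using transfer_meet[OF True A D(1)] D by auto
      moreover have "N u \<subseteq> A \<union> X" using in_sub A u by blast
      ultimately show False using u DA DX' by blast
    qed
  qed
  have Tv: "T (N v) = T' (?N' v)" if v: "v \<in> C - A" for v
    using F1[OF v] v unfolding T_def by (simp add: N'_eq)
  have Tu: "T (N u) = s ` T' (N (s u))" if u: "u \<in> A \<inter> C" for u
    unfolding T_def using s_N_img[OF sw A D(1)] u by auto
  have su: "s u \<in> D" if "u \<in> A" for u using s_AD[OF sw A D(1)] that by simp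
  have suC: "s u \<in> C - A \<and> ?N' (s u) = N (s u)" if u: "u \<in> A \<inter> C" for u
    using su[of u] u s_C[OF sw A D(1)] DA N'out[OF D(1) D(2)] by auto
  have inN: "v \<in> N v" for v by (simp add: closed_nbhd_def)
  have caseb: "\<exists>w\<in>T (N u) \<union> T (N v). (w \<in> N u) \<noteq> (w \<in> N v)"
    if u: "u \<in> A \<inter> C" and v: "v \<in> C - A" for u v
  proof (cases "v \<in> X")
    case False
    obtain e where e: "e \<in> T' (N (s u))" "e \<notin> X" using good u by blast
    have "e \<in> N (s u)" using T'sub[of "s u"] suC[OF u] e by auto
    then have "e \<in> D" using in_sub[OF D(1) su[of u]] u e by blast
    then have "s e \<in> A" using s_DA[OF sw A D(1)] by simp
    have "s e \<in> T (N u)" using Tu u e by auto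
    moreover have "s e \<in> N u" using s_N[OF sw A D(1), of e "s u"] \<open>e \<in> N (s u)\<close> by simp
    moreover have "s e \<notin> N v" using out_disj[OF A] False v \<open>s e \<in> A\<close> by blast
    ultimately show ?thesis by blast
  next
    case True
    have N'su: "?N' (s u) = N (s u)" using suC u by blast
    have ne: "?N' v \<noteq> N (s u)"
    proof
      assume eq: "?N' v = N (s u)"
      have "s u \<in> N v" using eq N'_eq v inN[of "s u"] by auto
      then have "N v \<inter> D \<noteq> {}" using su u by blast
      then have "N v \<inter> l \<noteq> {}" using transfer_meet[OF True D(1) l(1)] l by auto
      then obtain e where "e \<in> N v" "e \<in> l" by blast
      then have "e \<in> N (s u)" using eq N'_eq v lA by auto
      moreover have "N (s u) \<subseteq> D \<union> X" using in_sub D su u by blast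
      ultimately show False using lX lD \<open>e \<in> l\<close> by blast
    qed
    obtain w where w: "w \<in> T' (?N' v) \<union> T' (N (s u))" "(w \<in> ?N' v) \<noteq> (w \<in> N (s u))"
      using T'dist[of v "s u"] v suC[OF u] ne by auto
    show ?thesis
    proof (cases "w \<in> T' (N (s u))")
      case True
      have wN: "w \<in> N (s u)" using T'sub[of "s u"] suC[OF u] True by auto
      have "w \<notin> A" using in_sub[OF D(1) su[of u]] wN u DA AX by blast
      then have "(w \<in> ?N' v) = (w \<in> N v)" using N'_eq v by auto
      moreover have "(s w \<in> N v) = (w \<in> N v)" using s_NX[OF sw A D(1) \<open>v \<in> X\<close>] by simp
      moreover have "(s w \<in> N u) = (w \<in> N (s u))" using s_N2[OF sw A D(1), of w u] by simp
      moreover have "s w \<in> T (N u)" using Tu u True by auto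
      ultimately show ?thesis using w by blast
    next
      case False
      then have wT: "w \<in> T' (?N' v)" using w by auto
      have "w \<in> ?N' v" using T'sub v wT by auto
      then have wNv: "w \<in> N v" "w \<notin> A" using N'_eq v by auto
      have "w \<notin> N (s u)" using w \<open>w \<in> ?N' v\<close> by auto
      have "w \<notin> N u"
      proof
        assume wu: "w \<in> N u"
        show False
        proof (cases "w \<in> X")
          case True
          then have "s w = w" using s_X[OF sw A D(1)] by simp
          then show False using s_N[OF sw A D(1), of w u] wu \<open>w \<notin> N (s u)\<close> by simp
        next
          case False
          then show False using in_sub[OF A, of u] u wu wNv by blast
        qed
      qed
      moreover have "w \<in> T (N v)" using Tv v wT by auto
      ultimately show ?thesis using wNv by blast
    qed
  qed
  have nc: "non_clashing_pos (N ` C) T"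
    unfolding non_clashing_pos_def
  proof (intro conjI ballI impI)
    fix B assume "B \<in> N ` C"
    then obtain v where v: "v \<in> C" "B = N v" by blast
    show "T B \<subseteq> B"
    proof (cases "v \<in> A")
      case True
      have "T' (N (s v)) \<subseteq> N (s v)" using T'sub[of "s v"] suC[of v] True v by auto
      then have "s ` T' (N (s v)) \<subseteq> s ` N (s v)" by blast
      also have "\<dots> = N v" using s_N_img[OF sw A D(1), of "s v"] by simp
      finally show ?thesis using Tu[of v] True v by auto
    next
      case False
      then show ?thesis using Tv[of v] T'sub[of v] v N'_eq by auto
    qed
  next
    fix B B' assume "B \<in> N ` C" "B' \<in> N ` C" "B \<noteq> B'"
    then obtain v1 v2 where v: "v1 \<in> C" "v2 \<in> C" "B = N v1" "B' = N v2" "N v1 \<noteq> N v2" by blast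
    show "\<exists>w\<in>T B \<union> T B'. (w \<in> B) \<noteq> (w \<in> B')"
    proof (cases "v1 \<in> A")
      case True
      show ?thesis
      proof (cases "v2 \<in> A")
        case True2: True
        have ne: "N (s v1) \<noteq> N (s v2)"
          using v s_N_img[OF sw A D(1), of "s v1"] s_N_img[OF sw A D(1), of "s v2"] by auto
        obtain w where w: "w \<in> T' (N (s v1)) \<union> T' (N (s v2))" "(w \<in> N (s v1)) \<noteq> (w \<in> N (s v2))"
          using T'dist[of "s v1" "s v2"] suC[of v1] suC[of v2] True True2 v ne by auto
        have "s w \<in> T B \<union> T B'" using w Tu[of v1] Tu[of v2] True True2 v by auto
        moreover have "(s w \<in> B) \<noteq> (s w \<in> B')"
          using w s_N2[OF sw A D(1), of w v1] s_N2[OF sw A D(1), of w v2] v by simp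
        ultimately show ?thesis by blast
      next
        case False
        then show ?thesis using caseb[of v1 v2] True v by auto
      qed
    next
      case False
      show ?thesis
      proof (cases "v2 \<in> A")
        case True
        then show ?thesis using caseb[of v2 v1] False v by blast
      next
        case False2: False
        have ne: "?N' v1 \<noteq> ?N' v2"
          using inj_minus[OF A three False False2] v N'_eq False False2 by auto
        obtain w where w: "w \<in> T' (?N' v1) \<union> T' (?N' v2)" "(w \<in> ?N' v1) \<noteq> (w \<in> ?N' v2)"
          using T'dist[of v1 v2] v False False2 ne by auto
        have "w \<notin> A" using w T'sub[of v1] T'sub[of v2] v False False2 N'_eq by auto
        then have "(w \<in> B) \<noteq> (w \<in> B')" using w v N'_eq False False2 by auto
        moreover have "w \<in> T B \<union> T B'" using w Tv[of v1] Tv[of v2] v False False2 by auto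
        ultimately show ?thesis by blast
      qed
    qed
  qed
  have cardT: "\<forall>b\<in>N ` C. card (T b) \<le> k"
  proof
    fix B assume "B \<in> N ` C"
    then obtain v where v: "v \<in> C" "B = N v" by blast
    show "card (T B) \<le> k"
    proof (cases "v \<in> A")
      case True
      have "card (T B) = card (T' (N (s v)))"
        using Tu[of v] True v card_image[of s] s_inj[OF sw A D(1)] by (simp add: inj_on_def)
      also have "\<dots> \<le> k" using T'c suC[of v] True v by (metis IntI imageI)
      finally show ?thesis .
    next
      case False
      then show ?thesis using Tv[of v] T'c v by auto
    qed
  qed
  show ?thesis unfolding nc_ok_def using nc cardT by blast
qed

end

context copies begin

lemma fwd_dir:
  assumes big: "card DD \<ge> 2 * card X + 1" and three: "card DD \<ge> 3" and ok: "nc_ok (N ` C) k"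
  shows "\<exists>A\<in>DD. nc_ok (closed_nbhd (V - A) E ` (C - A)) k"
proof -
  obtain T where Tnc: "non_clashing_pos (N ` C) T" and Tc: "\<forall>b\<in>N ` C. card (T b) \<le> k"
    using ok unfolding nc_ok_def by blast
  have Tsub: "\<And>v. v \<in> C \<Longrightarrow> T (N v) \<subseteq> N v"
    using Tnc unfolding non_clashing_pos_def by blast
  have Tdist: "\<And>v1 v2. v1 \<in> C \<Longrightarrow> v2 \<in> C \<Longrightarrow> N v1 \<noteq> N v2 \<Longrightarrow>
      \<exists>w\<in>T (N v1) \<union> T (N v2). (w \<in> N v1) \<noteq> (w \<in> N v2)"
  proof -
    fix v1 v2 assume "v1 \<in> C" "v2 \<in> C" "N v1 \<noteq> N v2"
    moreover have "N v1 \<in> N ` C" "N v2 \<in> N ` C" using calculation by auto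
    ultimately show "\<exists>w\<in>T (N v1) \<union> T (N v2). (w \<in> N v1) \<noteq> (w \<in> N v2)"
      using Tnc unfolding non_clashing_pos_def by blast
  qed
  define hit where "hit x = {D \<in> DD. D \<inter> T (N x) \<noteq> {}}" for x
  define Tch where "Tch = (\<Union>x\<in>{x\<in>X. card (hit x) \<le> 2}. hit x)"
  have finX: "finite X" using XV finV finite_subset by blast
  have finhit: "finite (hit x)" for x unfolding hit_def using finDD by simp
  have cTch: "card Tch \<le> 2 * card X"
  proof -
    have "card Tch \<le> (\<Sum>x\<in>{x\<in>X. card (hit x) \<le> 2}. card (hit x))"
      unfolding Tch_def using finX by (intro card_UN_le) simp
    also have "\<dots> \<le> (\<Sum>x\<in>{x\<in>X. card (hit x) \<le> 2}. 2)" by (intro sum_mono) simp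
    also have "\<dots> = 2 * card {x\<in>X. card (hit x) \<le> 2}" by simp
    also have "\<dots> \<le> 2 * card X" using finX by (simp add: card_mono)
    finally show ?thesis .
  qed
  obtain A where A: "A \<in> DD" "A \<notin> Tch"
  proof (rule ccontr)
    assume "\<not> thesis"
    then have "DD \<subseteq> Tch" using that by blast
    moreover have "finite Tch" unfolding Tch_def using finhit finX by simp
    ultimately have "card DD \<le> card Tch" by (rule card_mono[rotated])
    then show False using cTch big by linarith
  qed
  have Aprop: "card (hit x) \<ge> 3" if x: "x \<in> X" and ne: "T (N x) \<inter> A \<noteq> {}" for x
  proof (rule ccontr)
    assume "\<not> card (hit x) \<ge> 3"
    moreover have "A \<in> hit x" unfolding hit_def using A ne by blast
    ultimately have "A \<in> Tch" unfolding Tch_def using x by auto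
    then show False using A by blast
  qed
  obtain D where D: "D \<in> DD" "D \<noteq> A" using third[OF three A(1) A(1)] by metis
  obtain s where sw: "is_swap E C s A D" using Dswap[OF A(1) D(1)] D(2) by metis
  have sinv[simp]: "\<And>u. s (s u) = u" using s_inv[OF sw A(1) D(1)] .
  let ?N' = "closed_nbhd (V - A) E"
  have DA: "D \<inter> A = {}" using Ddisj A D by auto
  define pick where "pick B' = N (SOME v. v \<in> C - A \<and> ?N' v = B')" for B'
  have pickN: "pick (?N' v) = N v" if v: "v \<in> C - A" for v
  proof -
    define v0 where "v0 = (SOME u. u \<in> C - A \<and> ?N' u = ?N' v)"
    have "v0 \<in> C - A \<and> ?N' v0 = ?N' v" unfolding v0_def by (rule someI[of _ v]) (use v in blast)
    then have "v0 \<in> C - A" "N v0 - A = N v - A" using N'_eq v by auto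
    then have "N v0 = N v" using inj_minus[OF A(1) three] v by blast
    then show ?thesis unfolding pick_def v0_def by simp
  qed
  define F where "F S = (S - A) \<union> s ` (S \<inter> A)" for S
  define T' where "T' B' = F (T (pick B'))" for B'
  have T'v: "T' (?N' v) = F (T (N v))" if "v \<in> C - A" for v
    unfolding T'_def using pickN that by simp
  have vX: "v \<in> X" if "v \<notin> A" "a \<in> A" "a \<in> N v" for v a
    using out_disj[OF A(1), of v] that by blast
  have sA: "s a \<in> D" "s a \<notin> A" if "a \<in> A" for a
    using s_AD[OF sw A(1) D(1)] that DA by auto
  have sN: "s a \<in> N v \<and> s a \<notin> A" if v: "v \<in> C - A" and a: "a \<in> T (N v) \<inter> A" for v a
  proof -
    have "a \<in> N v" using Tsub v a by blast
    then have "v \<in> X" using vX v a by blast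
    then have "s a \<in> N v" using s_NX[OF sw A(1) D(1)] \<open>a \<in> N v\<close> by simp
    then show ?thesis using sA a by blast
  qed
  have T'sub: "T' (?N' v) \<subseteq> ?N' v" if v: "v \<in> C - A" for v
  proof -
    have "F (T (N v)) \<subseteq> N v - A"
      unfolding F_def using Tsub[of v] v sN[OF v] by blast
    then show ?thesis using T'v[OF v] N'_eq v by auto
  qed
  have T'card: "card (T' (?N' v)) \<le> k" if v: "v \<in> C - A" for v
  proof -
    let ?S = "T (N v)"
    have finS: "finite ?S" using Tsub[of v] v finN finite_subset by blast
    have "card (F ?S) \<le> card (?S - A) + card (s ` (?S \<inter> A))"
      unfolding F_def by (rule card_Un_le)
    also have "\<dots> \<le> card (?S - A) + card (?S \<inter> A)"
      using finS by (simp add: card_image_le)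
    also have "\<dots> = card ?S"
    proof -
      have "?S = (?S - A) \<union> (?S \<inter> A)" by blast
      then have "card ?S = card ((?S - A) \<union> (?S \<inter> A))" by simp
      also have "\<dots> = card (?S - A) + card (?S \<inter> A)"
        using finS by (intro card_Un_disjoint) auto
      finally show ?thesis by simp
    qed
    also have "\<dots> \<le> k" using Tc v by auto
    finally show ?thesis using T'v[OF v] by simp
  qed
  have caseA: "\<exists>w'\<in>T' (?N' v1) \<union> T' (?N' v2). (w' \<in> ?N' v1) \<noteq> (w' \<in> ?N' v2)"
    if v1: "v1 \<in> C - A" and v2: "v2 \<in> C - A" and w: "w \<in> T (N v1)" "w \<in> A" "w \<notin> N v2"
    for v1 v2 w
  proof -
    have wN: "w \<in> N v1" using Tsub v1 w by blast
    then have v1X: "v1 \<in> X" using vX v1 w by blast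
    have swT: "s w \<in> T' (?N' v1)" using T'v[OF v1] w unfolding F_def by blast
    have swN: "s w \<in> ?N' v1" using T'sub[OF v1] swT by blast
    show ?thesis
    proof (cases "v2 \<in> X")
      case True
      then have "s w \<notin> N v2" using s_NX[OF sw A(1) D(1) True] w by simp
      then have "s w \<notin> ?N' v2" using N'_eq v2 by auto
      then show ?thesis using swT swN by blast
    next
      case False
      show ?thesis
      proof (cases "v2 \<in> D")
        case False2: False
        have "s w \<notin> N v2" using out_disj[OF D(1) False False2] sA w by blast
        then have "s w \<notin> ?N' v2" using N'_eq v2 by auto
        then show ?thesis using swT swN by blast
      next
        case True
        have "card (hit v1) \<ge> 3" using Aprop[OF v1X] w by blast
        then have "card (hit v1 - {A} - {D}) \<ge> 1"
          using finhit by (auto simp: card_Diff_singleton_if)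
        then have "hit v1 - {A} - {D} \<noteq> {}" by (metis card.empty not_one_le_zero)
        then obtain l where l: "l \<in> hit v1" "l \<noteq> A" "l \<noteq> D" by blast
        then have lDD: "l \<in> DD" and "l \<inter> T (N v1) \<noteq> {}" unfolding hit_def by auto
        then obtain e where e: "e \<in> l" "e \<in> T (N v1)" by blast
        have "e \<notin> A" using Ddisj[OF lDD A(1)] l e by blast
        then have eT: "e \<in> T' (?N' v1)" using T'v[OF v1] e unfolding F_def by blast
        have "e \<in> N v1" using Tsub v1 e by blast
        then have e1: "e \<in> ?N' v1" using N'_eq v1 \<open>e \<notin> A\<close> by auto
        have "N v2 \<subseteq> D \<union> X" using in_sub[OF D(1) True] .
        moreover have "l \<inter> D = {}" "l \<inter> X = {}" using Ddisj[OF lDD D(1)] l disjX[OF lDD] by auto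
        ultimately have "e \<notin> N v2" using e by blast
        then have "e \<notin> ?N' v2" using N'_eq v2 by auto
        then show ?thesis using eT e1 by blast
      qed
    qed
  qed
  have nc: "non_clashing_pos (?N' ` (C - A)) T'"
    unfolding non_clashing_pos_def
  proof (intro conjI ballI impI)
    fix B assume "B \<in> ?N' ` (C - A)"
    then obtain v where "v \<in> C - A" "B = ?N' v" by blast
    then show "T' B \<subseteq> B" using T'sub by blast
  next
    fix B B' assume "B \<in> ?N' ` (C - A)" "B' \<in> ?N' ` (C - A)" "B \<noteq> B'"
    then obtain v1 v2 where v: "v1 \<in> C - A" "v2 \<in> C - A" "B = ?N' v1" "B' = ?N' v2" "?N' v1 \<noteq> ?N' v2"
      by blast
    have "N v1 \<noteq> N v2" using v N'_eq by auto
    then obtain w where w: "w \<in> T (N v1) \<union> T (N v2)" "(w \<in> N v1) \<noteq> (w \<in> N v2)"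
      using Tdist[of v1 v2] v by auto
    show "\<exists>w\<in>T' B \<union> T' B'. (w \<in> B) \<noteq> (w \<in> B')"
    proof (cases "w \<in> A")
      case False
      have "w \<in> T' (?N' v1) \<union> T' (?N' v2)" using w False T'v v unfolding F_def by auto
      moreover have "(w \<in> ?N' v1) \<noteq> (w \<in> ?N' v2)" using w False N'_eq v by auto
      ultimately show ?thesis using v by blast
    next
      case True
      show ?thesis
      proof (cases "w \<in> T (N v1)")
        case True1: True
        then have "w \<notin> N v2" using Tsub v w by blast
        then show ?thesis using caseA[OF v(1) v(2) True1 True] v by blast
      next
        case False
        then have w2: "w \<in> T (N v2)" using w by blast
        then have "w \<notin> N v1" using Tsub v w by blast
        then show ?thesis using caseA[OF v(2) v(1) w2 True] v by blast
      qed
    qed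
  qed
  have "\<forall>b\<in>?N' ` (C - A). card (T' b) \<le> k" using T'card by blast
  then show ?thesis using nc A unfolding nc_ok_def by blast
qed

end

lemma NCTD_iff:
  assumes fin: "finite BB" and finB: "\<forall>B\<in>BB. finite B"
  shows "NCTD_pos BB \<le> k \<longleftrightarrow> nc_ok BB k"
proof
  let ?P = "\<lambda>k. \<exists>T. non_clashing_pos BB T \<and> (\<forall>B\<in>BB. card (T B) \<le> k)"
  have ncid: "non_clashing_pos BB (\<lambda>B. B)"
    unfolding non_clashing_pos_def by auto
  have "\<forall>B\<in>BB. card B \<le> (\<Sum>B\<in>BB. card B)"
    using fin by (auto intro: member_le_sum)
  then have ex: "?P (\<Sum>B\<in>BB. card B)" using ncid by blast
  assume le: "NCTD_pos BB \<le> k"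
  have "?P (NCTD_pos BB)" unfolding NCTD_pos_def by (rule LeastI_ex) (use ex in blast)
  then show "nc_ok BB k" unfolding nc_ok_def using le by (meson order_trans)
next
  assume "nc_ok BB k"
  then show "NCTD_pos BB \<le> k" unfolding nc_ok_def NCTD_pos_def by (blast intro: Least_le)
qed

lemma reach_S:
  assumes "reach_in S E a b" "a \<in> S" shows "b \<in> S"
  using assms unfolding reach_in_def by (induction rule: rtranclp.induct) auto

lemma reach_sym:
  assumes sym: "\<And>u v. E u v \<Longrightarrow> E v u" and r: "reach_in S E a b"
  shows "reach_in S E b a"
  using r unfolding reach_in_def
proof (induction rule: rtranclp.induct)
  case (rtrancl_refl a) then show ?case by simp
next
  case (rtrancl_into_rtrancl a b c)
  then have "(\<lambda>u w. u \<in> S \<and> w \<in> S \<and> E u w) c b" using sym by blast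
  then show ?case using rtrancl_into_rtrancl(3) by (rule converse_rtranclp_into_rtranclp)
qed

lemma reach_trans: "reach_in S E a b \<Longrightarrow> reach_in S E b c \<Longrightarrow> reach_in S E a c"
  unfolding reach_in_def by (rule rtranclp_trans)

lemma comp_facts:
  assumes sg: "simple_graph V E" and D: "D \<in> components_of (V - X) E"
  shows "D \<subseteq> V - X" "D \<noteq> {}" "\<And>u v. u \<in> D \<Longrightarrow> E u v \<Longrightarrow> v \<in> X \<or> v \<in> D"
proof -
  obtain v0 where v0: "v0 \<in> V - X" "D = {w. reach_in (V - X) E v0 w}"
    using D unfolding components_of_def mem_Collect_eq by (elim exE conjE) (rule that, assumption+)
  have inD: "(w \<in> D) = reach_in (V - X) E v0 w" for w using v0(2) by simp
  show "D \<subseteq> V - X"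
  proof
    fix w assume "w \<in> D"
    then have "reach_in (V - X) E v0 w" by (simp add: inD)
    then show "w \<in> V - X" using v0(1) by (rule reach_S)
  qed
  have "reach_in (V - X) E v0 v0" unfolding reach_in_def by simp
  then show "D \<noteq> {}" using inD by blast
  fix u v assume u: "u \<in> D" and e: "E u v"
  show "v \<in> X \<or> v \<in> D"
  proof (cases "v \<in> X")
    case False
    have "v \<in> V" using sg e unfolding simple_graph_def by blast
    have ru: "reach_in (V - X) E v0 u" using u by (simp add: inD)
    have "u \<in> V - X" using ru v0(1) by (rule reach_S)
    then have "reach_in (V - X) E u v" using False e \<open>v \<in> V\<close> unfolding reach_in_def
      by (intro r_into_rtranclp) simp
    then have "reach_in (V - X) E v0 v" by (rule reach_trans[OF ru])
    then show ?thesis by (simp add: inD)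
  qed simp
qed

lemma comp_disj:
  assumes sg: "simple_graph V E" and D1: "D1 \<in> components_of (V - X) E"
    and D2: "D2 \<in> components_of (V - X) E" and ne: "D1 \<noteq> D2"
  shows "D1 \<inter> D2 = {}"
proof (rule ccontr)
  assume "D1 \<inter> D2 \<noteq> {}"
  then obtain w where w: "w \<in> D1" "w \<in> D2" by blast
  obtain v1 where v1: "D1 = {w. reach_in (V - X) E v1 w}"
    using D1 unfolding components_of_def mem_Collect_eq by (elim exE conjE) (rule that, assumption+)
  obtain v2 where v2: "D2 = {w. reach_in (V - X) E v2 w}"
    using D2 unfolding components_of_def mem_Collect_eq by (elim exE conjE) (rule that, assumption+)
  have sym: "\<And>u v. E u v \<Longrightarrow> E v u" using sg unfolding simple_graph_def by blast
  have r1: "reach_in (V - X) E v1 w" "reach_in (V - X) E v2 w" using w v1 v2 by auto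
  have rs1: "reach_in (V - X) E w v1" by (rule reach_sym[where E=E, OF sym r1(1)])
  have rs2: "reach_in (V - X) E w v2" by (rule reach_sym[where E=E, OF sym r1(2)])
  note rs = rs1 rs2
  have "reach_in (V - X) E v1 z = reach_in (V - X) E v2 z" for z
  proof
    assume "reach_in (V - X) E v1 z"
    then have "reach_in (V - X) E w z" by (rule reach_trans[OF rs(1)])
    then show "reach_in (V - X) E v2 z" by (rule reach_trans[OF r1(2)])
  next
    assume "reach_in (V - X) E v2 z"
    then have "reach_in (V - X) E w z" by (rule reach_trans[OF rs(2)])
    then show "reach_in (V - X) E v1 z" by (rule reach_trans[OF r1(1)])
  qed
  then have "D1 = D2" using v1 v2 by auto
  then show False using ne by simp
qed

definition enum :: "'a set \<Rightarrow> nat \<Rightarrow> 'a" where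
  "enum A = (SOME f. bij_betw f {0..<card A} A)"

lemma enum_bij: "finite A \<Longrightarrow> bij_betw (enum A) {0..<card A} A"
proof -
  assume "finite A"
  from ex_bij_betw_nat_finite[OF this] obtain h where h: "bij_betw h {0..<card A} A" by blast
  show ?thesis unfolding enum_def by (rule someI[of _ h]) (rule h)
qed

definition code :: "('a \<Rightarrow> 'a \<Rightarrow> bool) \<Rightarrow> 'a set \<Rightarrow> 'a set \<Rightarrow> 'a set \<Rightarrow>
    nat \<times> (nat \<times> nat) set \<times> (nat \<times> 'a) set \<times> nat set" where
  "code E C X A = (card A, {(p,q). p < card A \<and> q < card A \<and> E (enum A p) (enum A q)},
     {(p,x). p < card A \<and> x \<in> X \<and> E (enum A p) x}, {p. p < card A \<and> enum A p \<in> C})"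

lemma swap_E_aux:
  assumes symE: "\<And>a b. E a b \<Longrightarrow> E b a"
   and compA: "\<And>u v. u \<in> A \<Longrightarrow> E u v \<Longrightarrow> v \<in> X \<or> v \<in> A"
   and compD: "\<And>u v. u \<in> D \<Longrightarrow> E u v \<Longrightarrow> v \<in> X \<or> v \<in> D"
   and disj: "A \<inter> D = {}" "A \<inter> X = {}" "D \<inter> X = {}"
   and sA: "\<And>u. u \<in> A \<Longrightarrow> s u \<in> D" and sD: "\<And>u. u \<in> D \<Longrightarrow> s u \<in> A"
   and sO: "\<And>u. u \<notin> A \<union> D \<Longrightarrow> s u = u"
   and eAA: "\<And>u v. u \<in> A \<Longrightarrow> v \<in> A \<Longrightarrow> E (s u) (s v) = E u v"
   and eDD: "\<And>u v. u \<in> D \<Longrightarrow> v \<in> D \<Longrightarrow> E (s u) (s v) = E u v"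
   and eAX: "\<And>u x. u \<in> A \<Longrightarrow> x \<in> X \<Longrightarrow> E (s u) x = E u x"
   and eDX: "\<And>u x. u \<in> D \<Longrightarrow> x \<in> X \<Longrightarrow> E (s u) x = E u x"
  shows "E (s u) (s v) = E u v"
proof -
  have key: "E (s u) (s v) = E u v" if u: "u \<in> A \<union> D" for u v
  proof -
    consider (a) "v \<in> A" | (d) "v \<in> D" | (x) "v \<in> X" | (o) "v \<notin> A \<union> D \<union> X" by blast
    then show ?thesis
    proof cases
      case a
      show ?thesis
      proof (cases "u \<in> A")
        case True then show ?thesis using eAA a by blast
      next
        case False
        then have uD: "u \<in> D" using u by blast
        have "\<not> E u v" using compD[OF uD] a disj by blast
        moreover have "\<not> E (s u) (s v)" using compA[OF sD[OF uD]] sA[OF a] disj by blast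
        ultimately show ?thesis by blast
      qed
    next
      case d
      show ?thesis
      proof (cases "u \<in> D")
        case True then show ?thesis using eDD d by blast
      next
        case False
        then have uA: "u \<in> A" using u by blast
        have "\<not> E u v" using compA[OF uA] d disj by blast
        moreover have "\<not> E (s u) (s v)" using compD[OF sA[OF uA]] sD[OF d] disj by blast
        ultimately show ?thesis by blast
      qed
    next
      case x
      then have "s v = v" using sO disj by blast
      then show ?thesis using eAX eDX x u by auto
    next
      case o
      then have sv: "s v = v" using sO by blast
      have "s u \<in> A \<union> D" using u sA sD by blast
      then have "\<not> E (s u) v" using compA compD o by blast
      moreover have "\<not> E u v" using compA compD o u by blast
      ultimately show ?thesis using sv by simp
    qed
  qed
  show ?thesis
  proof (cases "u \<in> A \<union> D")
    case True then show ?thesis using key by blast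
  next
    case False
    then have su: "s u = u" using sO by blast
    show ?thesis
    proof (cases "v \<in> A \<union> D")
      case True
      have "E (s v) (s u) = E v u" using key[OF True] .
      then show ?thesis using su symE by metis
    next
      case False then show ?thesis using su sO by simp
    qed
  qed
qed

lemma code_swap:
  assumes sg: "simple_graph V E" and A: "A \<in> components_of (V - X) E"
    and D: "D \<in> components_of (V - X) E" and ne: "A \<noteq> D"
    and eq: "code E C X A = code E C X D"
  shows "\<exists>s. is_swap E C s A D"
proof -
  have symE: "\<And>a b. E a b \<Longrightarrow> E b a" using sg unfolding simple_graph_def by blast
  have finV: "finite V" using sg unfolding simple_graph_def by blast
  have AV: "A \<subseteq> V - X" and DV: "D \<subseteq> V - X" using comp_facts[OF sg A] comp_facts[OF sg D] by auto
  have finA: "finite A" and finD: "finite D" using AV DV finV finite_subset by blast+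
  have compA: "\<And>u v. u \<in> A \<Longrightarrow> E u v \<Longrightarrow> v \<in> X \<or> v \<in> A" using comp_facts[OF sg A] by blast
  have compD: "\<And>u v. u \<in> D \<Longrightarrow> E u v \<Longrightarrow> v \<in> X \<or> v \<in> D" using comp_facts[OF sg D] by blast
  have disj: "A \<inter> D = {}" "A \<inter> X = {}" "D \<inter> X = {}" using comp_disj[OF sg A D ne] AV DV by auto
  define n where "n = card A"
  have nD: "card D = n" using eq unfolding code_def n_def by simp
  define fA where "fA = enum A"
  define fD where "fD = enum D"
  have bA: "bij_betw fA {0..<n} A" unfolding fA_def n_def using enum_bij[OF finA] .
  have bD: "bij_betw fD {0..<n} D" unfolding fD_def using enum_bij[OF finD] nD by simp
  define gA where "gA = the_inv_into {0..<n} fA"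
  define gD where "gD = the_inv_into {0..<n} fD"
  have injA: "inj_on fA {0..<n}" and imA: "fA ` {0..<n} = A" using bA by (auto simp: bij_betw_def)
  have gA1: "gA u < n" "fA (gA u) = u" if "u \<in> A" for u
  proof -
    have u': "u \<in> fA ` {0..<n}" using that imA by simp
    show "gA u < n" using the_inv_into_into[OF injA u' subset_refl] unfolding gA_def by simp
    show "fA (gA u) = u" using f_the_inv_into_f[OF injA u'] unfolding gA_def by simp
  qed
  have injD: "inj_on fD {0..<n}" and imD: "fD ` {0..<n} = D" using bD by (auto simp: bij_betw_def)
  have gD1: "gD u < n" "fD (gD u) = u" if "u \<in> D" for u
  proof -
    have u': "u \<in> fD ` {0..<n}" using that imD by simp
    show "gD u < n" using the_inv_into_into[OF injD u' subset_refl] unfolding gD_def by simp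
    show "fD (gD u) = u" using f_the_inv_into_f[OF injD u'] unfolding gD_def by simp
  qed
  have gA2: "gA (fA p) = p" if "p < n" for p
    using that bA unfolding gA_def by (auto simp: bij_betw_def the_inv_into_f_f)
  have gD2: "gD (fD p) = p" if "p < n" for p
    using that bD unfolding gD_def by (auto simp: bij_betw_def the_inv_into_f_f)
  have fA1: "fA p \<in> A" if "p < n" for p using bA that by (auto simp: bij_betw_def)
  have fD1: "fD p \<in> D" if "p < n" for p using bD that by (auto simp: bij_betw_def)
  have c2: "{(p,q). p < n \<and> q < n \<and> E (fA p) (fA q)} = {(p,q). p < n \<and> q < n \<and> E (fD p) (fD q)}"
    using eq nD unfolding code_def fA_def fD_def n_def by simp
  have c3: "{(p,x). p < n \<and> x \<in> X \<and> E (fA p) x} = {(p,x). p < n \<and> x \<in> X \<and> E (fD p) x}"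
    using eq nD unfolding code_def fA_def fD_def n_def by simp
  have c4: "{p. p < n \<and> fA p \<in> C} = {p. p < n \<and> fD p \<in> C}"
    using eq nD unfolding code_def fA_def fD_def n_def by simp
  have R1: "E (fA p) (fA q) = E (fD p) (fD q)" if "p < n" "q < n" for p q
  proof -
    have "((p,q) \<in> {(p,q). p < n \<and> q < n \<and> E (fA p) (fA q)}) = ((p,q) \<in> {(p,q). p < n \<and> q < n \<and> E (fD p) (fD q)})"
      by (simp only: c2)
    then show ?thesis using that by simp
  qed
  have R2: "E (fA p) x = E (fD p) x" if "p < n" "x \<in> X" for p x
  proof -
    have "((p,x) \<in> {(p,x). p < n \<and> x \<in> X \<and> E (fA p) x}) = ((p,x) \<in> {(p,x). p < n \<and> x \<in> X \<and> E (fD p) x})"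
      by (simp only: c3)
    then show ?thesis using that by simp
  qed
  have R3: "(fA p \<in> C) = (fD p \<in> C)" if "p < n" for p
  proof -
    have "(p \<in> {p. p < n \<and> fA p \<in> C}) = (p \<in> {p. p < n \<and> fD p \<in> C})" by (simp only: c4)
    then show ?thesis using that by simp
  qed
  define s where "s u = (if u \<in> A then fD (gA u) else if u \<in> D then fA (gD u) else u)" for u
  have sA: "s u \<in> D" "s u = fD (gA u)" if "u \<in> A" for u using that gA1 fD1 unfolding s_def by auto
  have sD: "s u \<in> A" "s u = fA (gD u)" if "u \<in> D" for u using that gD1 fA1 disj unfolding s_def by auto
  have sO: "s u = u" if "u \<notin> A \<union> D" for u using that unfolding s_def by auto
  have sinv: "s (s u) = u" for u
  proof -
    consider "u \<in> A" | "u \<in> D" | "u \<notin> A \<union> D" by blast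
    then show ?thesis
    proof cases
      case 1 then show ?thesis using sA[OF 1] sD[of "s u"] gD2 gA1 by simp
    next
      case 2 then show ?thesis using sD[OF 2] sA[of "s u"] gA2 gD1 by simp
    next
      case 3 then show ?thesis using sO by simp
    qed
  qed
  have sE: "E (s u) (s v) = E u v" for u v
  proof (rule swap_E_aux[where A=A and D=D and X=X])
    show "\<And>a b. E a b \<Longrightarrow> E b a" by (rule symE)
    show "\<And>u v. u \<in> A \<Longrightarrow> E u v \<Longrightarrow> v \<in> X \<or> v \<in> A" by (rule compA)
    show "\<And>u v. u \<in> D \<Longrightarrow> E u v \<Longrightarrow> v \<in> X \<or> v \<in> D" by (rule compD)
    show "A \<inter> D = {}" "A \<inter> X = {}" "D \<inter> X = {}" by (rule disj)+
    show "\<And>u. u \<in> A \<Longrightarrow> s u \<in> D" using sA by blast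
    show "\<And>u. u \<in> D \<Longrightarrow> s u \<in> A" using sD by blast
    show "\<And>u. u \<notin> A \<union> D \<Longrightarrow> s u = u" using sO by blast
    show "\<And>u v. u \<in> A \<Longrightarrow> v \<in> A \<Longrightarrow> E (s u) (s v) = E u v"
    proof -
      fix u v assume uv: "u \<in> A" "v \<in> A"
      have "E (s u) (s v) = E (fD (gA u)) (fD (gA v))" using sA(2) uv by simp
      also have "\<dots> = E (fA (gA u)) (fA (gA v))" using R1 gA1(1) uv by simp
      also have "\<dots> = E u v" using gA1(2) uv by simp
      finally show "E (s u) (s v) = E u v" .
    qed
    show "\<And>u v. u \<in> D \<Longrightarrow> v \<in> D \<Longrightarrow> E (s u) (s v) = E u v"
    proof -
      fix u v assume uv: "u \<in> D" "v \<in> D"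
      have "E (s u) (s v) = E (fA (gD u)) (fA (gD v))" using sD(2) uv by simp
      also have "\<dots> = E (fD (gD u)) (fD (gD v))" using R1 gD1(1) uv by simp
      also have "\<dots> = E u v" using gD1(2) uv by simp
      finally show "E (s u) (s v) = E u v" .
    qed
    show "\<And>u x. u \<in> A \<Longrightarrow> x \<in> X \<Longrightarrow> E (s u) x = E u x"
    proof -
      fix u x assume ux: "u \<in> A" "x \<in> X"
      have "E (s u) x = E (fD (gA u)) x" using sA(2) ux by simp
      also have "\<dots> = E (fA (gA u)) x" using R2 gA1(1) ux by simp
      also have "\<dots> = E u x" using gA1(2) ux by simp
      finally show "E (s u) x = E u x" .
    qed
    show "\<And>u x. u \<in> D \<Longrightarrow> x \<in> X \<Longrightarrow> E (s u) x = E u x"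
    proof -
      fix u x assume ux: "u \<in> D" "x \<in> X"
      have "E (s u) x = E (fA (gD u)) x" using sD(2) ux by simp
      also have "\<dots> = E (fD (gD u)) x" using R2 gD1(1) ux by simp
      also have "\<dots> = E u x" using gD1(2) ux by simp
      finally show "E (s u) x = E u x" .
    qed
  qed
  have sC: "(s u \<in> C) = (u \<in> C)" for u
  proof -
    consider "u \<in> A" | "u \<in> D" | "u \<notin> A \<union> D" by blast
    then show ?thesis
    proof cases
      case 1 then show ?thesis using sA(2)[OF 1] gA1[OF 1] R3[of "gA u"] by simp
    next
      case 2 then show ?thesis using sD(2)[OF 2] gD1[OF 2] R3[of "gD u"] by simp
    next
      case 3 then show ?thesis using sO by simp
    qed
  qed
  have simg: "s ` A = D"
  proof
    show "s ` A \<subseteq> D" using sA by blast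
    show "D \<subseteq> s ` A"
    proof
      fix d assume d: "d \<in> D"
      then have "s d \<in> A" using sD by blast
      moreover have "s (s d) = d" by (rule sinv)
      ultimately show "d \<in> s ` A" using image_eqI[of d s "s d" A] by simp
    qed
  qed
  have "is_swap E C s A D" unfolding is_swap_def using sinv sE sO simg sC by blast
  then show ?thesis by blast
qed

lemma pigeon:
  assumes fS: "finite S" and fK: "finite K" and img: "f ` S \<subseteq> K" and big: "card S > card K * m"
  shows "\<exists>c. card {a\<in>S. f a = c} > m"
proof (rule ccontr)
  assume "\<not> ?thesis"
  then have le: "\<And>c. card {a\<in>S. f a = c} \<le> m" by (simp add: not_less)
  have "S = (\<Union>c\<in>K. {a\<in>S. f a = c})" using img by blast
  then have "card S = card (\<Union>c\<in>K. {a\<in>S. f a = c})" by simp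
  also have "\<dots> \<le> (\<Sum>c\<in>K. card {a\<in>S. f a = c})" using fK by (rule card_UN_le)
  also have "\<dots> \<le> (\<Sum>c\<in>K. m)" using le by (intro sum_mono) blast
  also have "\<dots> = card K * m" by simp
  finally show False using big by simp
qed

lemma exp_bound: "t \<ge> 1 \<Longrightarrow> 2 * a + t + 1 \<le> (2::nat) ^ (a + t)"
proof (induction a)
  case 0
  have "t < 2 ^ t" by simp
  then show ?case by (simp add: Suc_le_eq)
next
  case (Suc a)
  have "(2::nat) ^ 1 \<le> 2 ^ (a + t)" using Suc.prems by (intro power_increasing) auto
  then show ?case using Suc by simp
qed

lemma arith_bound:
  fixes a t :: nat
  assumes t: "t \<ge> 1"
  shows "t * 2 ^ (t * t) * 2 ^ (t * a) * 2 ^ t * (2 * a + t + 1)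
         \<le> (a + t) * 2 ^ ((a + t)\<^sup>2) * 2 ^ (2 * t + a + 1)"
proof -
  have "t * 2 ^ (t * t) * 2 ^ (t * a) * 2 ^ t * (2 * a + t + 1)
        \<le> t * 2 ^ (t * t) * 2 ^ (t * a) * 2 ^ t * 2 ^ (a + t)"
    using exp_bound[OF t, of a] by (intro mult_left_mono) simp_all
  also have "\<dots> = t * 2 ^ (t * t + t * a + t + (a + t))" by (simp add: power_add)
  also have "\<dots> \<le> (a + t) * 2 ^ ((a + t)\<^sup>2 + (2 * t + a + 1))"
  proof (rule mult_mono)
    have "t * t + t * a + t + (a + t) \<le> (a + t)\<^sup>2 + (2 * t + a + 1)"
      by (simp add: power2_eq_square algebra_simps)
    then show "(2::nat) ^ (t * t + t * a + t + (a + t)) \<le> 2 ^ ((a + t)\<^sup>2 + (2 * t + a + 1))"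
      by (intro power_increasing) simp_all
  qed simp_all
  also have "\<dots> = (a + t) * 2 ^ ((a + t)\<^sup>2) * 2 ^ (2 * t + a + 1)" by (simp add: power_add)
  finally show ?thesis .
qed


theorem lemma2:
  fixes V :: "'a set" and E :: "'a \<Rightarrow> 'a \<Rightarrow> bool"
    and C X :: "'a set" and \<A> :: "'a set set" and k :: nat
  assumes "simple_graph V E"
    and "C \<subseteq> V"
    and "0 < k"
    and "X \<subseteq> V"
    and "\<A> \<subseteq> components_of (V - X) E"
    and "card \<A> > (card X + Max (card ` \<A>)) * 2 ^ ((card X + Max (card ` \<A>))\<^sup>2)
                    * 2 ^ (2 * Max (card ` \<A>) + card X + 1)"
  shows "\<exists>Ai\<in>\<A>.
           NCTD_pos (closed_nbhd V E ` C) \<le> k \<longleftrightarrow>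
           NCTD_pos (closed_nbhd (V - Ai) E ` (C - Ai)) \<le> k"
proof -
  note sg = assms(1) and CV = assms(2) and XV = assms(4) and Asub = assms(5)
  define t where "t = Max (card ` \<A>)"
  have bigA: "card \<A> > (card X + t) * 2 ^ ((card X + t)\<^sup>2) * 2 ^ (2 * t + card X + 1)"
    using assms(6) unfolding t_def .
  have finV: "finite V" using sg unfolding simple_graph_def by blast
  have finX: "finite X" using XV finV finite_subset by blast
  have compV: "A \<subseteq> V" if "A \<in> \<A>" for A using comp_facts(1)[OF sg] Asub that by blast
  have finA: "finite \<A>"
  proof (rule finite_subset)
    show "\<A> \<subseteq> Pow V" using compV by blast
    show "finite (Pow V)" using finV by simp
  qed
  have Ane: "\<A> \<noteq> {}" using bigA by (metis card.empty not_less_zero)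
  have cardA: "1 \<le> card A \<and> card A \<le> t" if A: "A \<in> \<A>" for A
  proof
    have "A \<noteq> {}" using comp_facts(2)[OF sg] Asub A by blast
    moreover have "finite A" using compV[OF A] finV finite_subset by blast
    ultimately show "1 \<le> card A" by (simp add: Suc_le_eq card_gt_0_iff)
    show "card A \<le> t" unfolding t_def using finA A by (intro Max_ge) auto
  qed
  have t1: "t \<ge> 1" using Ane cardA by force
  define K where "K = {1..t} \<times> Pow ({..<t} \<times> {..<t}) \<times> Pow ({..<t} \<times> X) \<times> Pow {..<t}"
  have finK: "finite K" unfolding K_def using finX by simp
  have cardK: "card K = t * 2 ^ (t * t) * 2 ^ (t * card X) * 2 ^ t"
    unfolding K_def using finX by (simp add: card_cartesian_product card_Pow)
  have img: "code E C X ` \<A> \<subseteq> K"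
  proof
    fix c assume "c \<in> code E C X ` \<A>"
    then obtain A where A: "A \<in> \<A>" "c = code E C X A" by blast
    then show "c \<in> K" using cardA[OF A(1)] unfolding K_def code_def by auto
  qed
  have "card K * (2 * card X + t + 1)
        \<le> (card X + t) * 2 ^ ((card X + t)\<^sup>2) * 2 ^ (2 * t + card X + 1)"
    using arith_bound[OF t1, of "card X"] cardK by simp
  then have big: "card \<A> > card K * (2 * card X + t + 1)" using bigA by linarith
  obtain c where c: "card {A\<in>\<A>. code E C X A = c} > 2 * card X + t + 1"
    using pigeon[OF finA finK img big] by blast
  define DD where "DD = {A\<in>\<A>. code E C X A = c}"
  have DDsub: "DD \<subseteq> \<A>" unfolding DD_def by blast
  have finDD: "finite DD" using finA DDsub finite_subset by blast
  have cp: "copies V E C X DD"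
  proof
    show "simple_graph V E" "C \<subseteq> V" "X \<subseteq> V" "finite DD" using sg CV XV finDD by auto
    show "\<And>D. D \<in> DD \<Longrightarrow> D \<subseteq> V - X" using comp_facts(1)[OF sg] Asub DDsub by blast
    show "\<And>D u v. D \<in> DD \<Longrightarrow> u \<in> D \<Longrightarrow> E u v \<Longrightarrow> v \<in> X \<or> v \<in> D"
      using comp_facts(3)[OF sg] Asub DDsub by blast
    show "\<And>D1 D2. D1 \<in> DD \<Longrightarrow> D2 \<in> DD \<Longrightarrow> D1 \<noteq> D2 \<Longrightarrow> D1 \<inter> D2 = {}"
      using comp_disj[OF sg] Asub DDsub by blast
    show "\<And>A D. A \<in> DD \<Longrightarrow> D \<in> DD \<Longrightarrow> A \<noteq> D \<Longrightarrow> \<exists>s. is_swap E C s A D"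
    proof -
      fix A D assume AD: "A \<in> DD" "D \<in> DD" "A \<noteq> D"
      then have "code E C X A = code E C X D" unfolding DD_def by simp
      moreover have "A \<in> components_of (V - X) E" "D \<in> components_of (V - X) E"
        using AD DDsub Asub by auto
      ultimately show "\<exists>s. is_swap E C s A D" using code_swap[OF sg] AD(3) by blast
    qed
  qed
  have cDD: "card DD > 2 * card X + t + 1" using c unfolding DD_def .
  have c3: "card DD \<ge> 3" using cDD t1 by linarith
  have c2: "card DD \<ge> 2 * card X + 1" using cDD by linarith
  have ct: "card DD \<ge> t + 2" using cDD by linarith
  have finN: "finite (closed_nbhd S E v)" if "S \<subseteq> V" for S v
  proof -
    have "closed_nbhd S E v \<subseteq> insert v V" using that unfolding closed_nbhd_def by auto
    then show ?thesis using finV finite_subset by blast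
  qed
  have iffN: "NCTD_pos (closed_nbhd V E ` C) \<le> k \<longleftrightarrow> nc_ok (closed_nbhd V E ` C) k"
    using finV CV finN[of V] by (intro NCTD_iff) (auto intro: finite_subset)
  have iffN': "NCTD_pos (closed_nbhd (V - A) E ` (C - A)) \<le> k \<longleftrightarrow>
      nc_ok (closed_nbhd (V - A) E ` (C - A)) k" for A
    using finV CV finN[of "V - A"] by (intro NCTD_iff) (auto intro: finite_subset)
  show ?thesis
  proof (cases "NCTD_pos (closed_nbhd V E ` C) \<le> k")
    case True
    then have "nc_ok (closed_nbhd V E ` C) k" using iffN by blast
    then obtain A where A: "A \<in> DD" "nc_ok (closed_nbhd (V - A) E ` (C - A)) k"
      using copies.fwd_dir[OF cp c2 c3] by blast
    then have "NCTD_pos (closed_nbhd (V - A) E ` (C - A)) \<le> k" using iffN' by blast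
    then show ?thesis using A(1) DDsub True by blast
  next
    case False
    have "DD \<noteq> {}" using c3 by auto
    then obtain A where A: "A \<in> DD" by blast
    have "\<not> NCTD_pos (closed_nbhd (V - A) E ` (C - A)) \<le> k"
    proof
      assume "NCTD_pos (closed_nbhd (V - A) E ` (C - A)) \<le> k"
      then have "nc_ok (closed_nbhd (V - A) E ` (C - A)) k" using iffN' by blast
      then have "nc_ok (closed_nbhd V E ` C) k"
        using copies.back_dir[OF cp A c3 ct] cardA A DDsub by blast
      then show False using False iffN by blast
    qed
    then show ?thesis using A DDsub False by blast
  qed
qed

end
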